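(* Let $H$ be $d^4/dx^4$ in $L_2(\mathbb{R}_+)$ with boundary conditions $u''(0)=\alpha u(0)+\alpha_1u'(0)$, $u'''(0)=-\alpha_2u(0)-\bar\alpha u'(0)$ ($\alpha\in\mathbb{C}$, $\alpha_1,\alpha_2\in\mathbb{R}$). The functions $s(\lambda)=\overline{\Omega(k)}/\Omega(k)$ and $b(\lambda)=(\alpha_0+2i\operatorname{Im}\alpha\,k^2+k^4)/\Omega(k)$, $k=\lambda^{1/4}$, are infinitely differentiable for all $\lambda>0$ (being extended by continuity at a positive eigenvalue of $H$, if there is one). If $\lambda_0$ is a positive eigenvalue of $H$, then $$s(\lambda_0)=\frac{\alpha+i\sqrt{\lambda_0}}{\alpha-i\sqrt{\lambda_0}},\qquad b(\lambda_0)=-\frac{2\sqrt{\lambda_0}}{\alpha-i\sqrt{\lambda_0}}.$$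
   Context: $\alpha_0=\alpha_1\alpha_2-|\alpha|^2$, $\Omega(\zeta)=\alpha_0+(1-i)\alpha_2\zeta+2i\operatorname{Re}\alpha\,\zeta^2-(1+i)\alpha_1\zeta^3-\zeta^4$. $H$ acts as $u\mapsto u^{(4)}$ on $u\in\mathsf{H}^4(\mathbb{R}_+)$ satisfying the boundary conditions; it is self-adjoint. *)

theory Defs
  imports "HOL-Analysis.Analysis"
begin

definition alpha0 :: "complex \<Rightarrow> real \<Rightarrow> real \<Rightarrow> complex" where
  "alpha0 \<alpha> \<alpha>1 \<alpha>2 = complex_of_real (\<alpha>1 * \<alpha>2 - (cmod \<alpha>)\<^sup>2)"

definition Omega :: "complex \<Rightarrow> real \<Rightarrow> real \<Rightarrow> complex \<Rightarrow> complex" where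
  "Omega \<alpha> \<alpha>1 \<alpha>2 \<zeta> = alpha0 \<alpha> \<alpha>1 \<alpha>2 + (1 - \<i>) * of_real \<alpha>2 * \<zeta>
     + 2 * \<i> * of_real (Re \<alpha>) * \<zeta>^2 - (1 + \<i>) * of_real \<alpha>1 * \<zeta>^3 - \<zeta>^4"

definition kk :: "real \<Rightarrow> complex" where
  "kk l = complex_of_real (root 4 l)"

definition s_fun :: "complex \<Rightarrow> real \<Rightarrow> real \<Rightarrow> real \<Rightarrow> complex" where
  "s_fun \<alpha> \<alpha>1 \<alpha>2 l = cnj (Omega \<alpha> \<alpha>1 \<alpha>2 (kk l)) / Omega \<alpha> \<alpha>1 \<alpha>2 (kk l)"

definition b_fun :: "complex \<Rightarrow> real \<Rightarrow> real \<Rightarrow> real \<Rightarrow> complex" where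
  "b_fun \<alpha> \<alpha>1 \<alpha>2 l = (alpha0 \<alpha> \<alpha>1 \<alpha>2 + 2 * \<i> * of_real (Im \<alpha>) * (kk l)^2 + (kk l)^4)
      / Omega \<alpha> \<alpha>1 \<alpha>2 (kk l)"

definition smooth_on :: "real set \<Rightarrow> (real \<Rightarrow> complex) \<Rightarrow> bool" where
  "smooth_on S f \<longleftrightarrow> (\<exists>D :: nat \<Rightarrow> real \<Rightarrow> complex.
      (\<forall>x\<in>S. D 0 x = f x) \<and>
      (\<forall>n. \<forall>x\<in>S. (D n has_vector_derivative D (Suc n) x) (at x)))"

definition L2_halfline :: "(real \<Rightarrow> complex) \<Rightarrow> bool" where
  "L2_halfline u \<longleftrightarrow> (\<lambda>x. (cmod (u x))\<^sup>2) integrable_on {0..}"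

definition is_eigenvalue_H :: "complex \<Rightarrow> real \<Rightarrow> real \<Rightarrow> real \<Rightarrow> bool" where
  "is_eigenvalue_H \<alpha> \<alpha>1 \<alpha>2 l \<longleftrightarrow>
    (\<exists>u u1 u2 u3 u4 :: real \<Rightarrow> complex.
      (\<forall>x\<ge>0. (u has_vector_derivative u1 x) (at x within {0..}) \<and>
              (u1 has_vector_derivative u2 x) (at x within {0..}) \<and>
              (u2 has_vector_derivative u3 x) (at x within {0..}) \<and>
              (u3 has_vector_derivative u4 x) (at x within {0..})) \<and>
      L2_halfline u \<and> L2_halfline u1 \<and> L2_halfline u2 \<and> L2_halfline u3 \<and> L2_halfline u4 \<and>
      u2 0 = \<alpha> * u 0 + of_real \<alpha>1 * u1 0 \<and>
      u3 0 = - of_real \<alpha>2 * u 0 - cnj \<alpha> * u1 0 \<and>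
      (\<forall>x\<ge>0. u4 x = of_real l * u x) \<and>
      (\<exists>x\<ge>0. u x \<noteq> 0))"

end

theory Submission
  imports Defs "HOL-Complex_Analysis.Complex_Analysis"
begin


lemma ode1:
  fixes f :: "real \<Rightarrow> complex"
  assumes d: "\<forall>x\<ge>0. (f has_vector_derivative c * f x) (at x within {0..})"
  shows "\<forall>x\<ge>0. f x = f 0 * exp (c * of_real x)"
proof -
  define h where "h x = f x * exp (- c * of_real x)" for x :: real
  have "(h has_vector_derivative 0) (at x within {0..})" if "x \<in> {0..}" for x
  proof -
    have e: "((\<lambda>z. exp (- c * z)) has_field_derivative exp (- c * of_real x) * (- c)) (at (of_real x))"
      by (auto intro!: derivative_eq_intros)
    have e': "((\<lambda>x. exp (- c * of_real x)) has_vector_derivative exp (- c * of_real x) * (- c)) (at x within {0..})"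
      using has_vector_derivative_real_field[OF e] by simp
    have "(h has_vector_derivative (f x * (exp (- c * of_real x) * (- c)) + (c * f x) * exp (- c * of_real x))) (at x within {0..})"
      unfolding h_def
      by (rule has_vector_derivative_mult[OF _ e']) (use d that in auto)
    then show ?thesis by (simp add: algebra_simps)
  qed
  then obtain k where k: "\<And>x. x \<in> {0..} \<Longrightarrow> h x = k"
    using has_vector_derivative_zero_constant[of "{0..}" h] by (auto simp: convex_real_interval)
  show ?thesis
  proof (intro allI impI)
    fix x :: real assume x: "x \<ge> 0"
    have "h x = h 0" using k x by auto
    then have "f x * exp (- c * of_real x) = f 0" by (simp add: h_def)
    then have "f x * exp (- c * of_real x) * exp (c * of_real x) = f 0 * exp (c * of_real x)" by simp
    then show "f x = f 0 * exp (c * of_real x)"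
      by (simp add: mult.assoc flip: exp_add)
  qed
qed

lemma l2_zero:
  fixes f :: "real \<Rightarrow> complex" and g :: "real \<Rightarrow> real"
  assumes e: "\<forall>x\<ge>0. f x = f 0 * exp (c * of_real x)" and c: "Re c \<ge> 0"
    and g: "g integrable_on {0..}" and b: "\<forall>x\<ge>0. (cmod (f x))\<^sup>2 \<le> g x"
  shows "f 0 = 0"
proof (rule ccontr)
  assume "f 0 \<noteq> 0"
  define m where "m = (cmod (f 0))\<^sup>2"
  have m: "m > 0" using \<open>f 0 \<noteq> 0\<close> by (simp add: m_def)
  have gm: "g x \<ge> m" if "x \<ge> 0" for x
  proof -
    have fx: "f x = f 0 * exp (c * of_real x)" using e that by blast
    have "cmod (f x) = cmod (f 0) * exp (Re c * x)" unfolding fx by (simp add: norm_mult)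
    also have "\<dots> \<ge> cmod (f 0)" using c that by (simp add: mult_le_cancel_left1)
    finally have "cmod (f 0) \<le> cmod (f x)" .
    then have "m \<le> (cmod (f x))\<^sup>2" unfolding m_def by (simp add: power_mono)
    then show ?thesis using b that by force
  qed
  have gnn: "0 \<le> g x" if "x \<in> {0..}" for x
  proof -
    have "m \<le> g x" using gm that by simp
    then show ?thesis using m by linarith
  qed
  define I where "I = integral {0..} g"
  define t where "t = I / m + 1"
  have "0 \<le> I" unfolding I_def by (rule integral_nonneg[OF g gnn])
  then have t0: "t \<ge> 0" using m by (simp add: t_def)
  have gi: "g integrable_on {0..t}"
    using integrable_on_subcbox[OF g, of 0 t] by simp
  have "integral {0..t} (\<lambda>x. m) \<le> integral {0..t} g"
    by (rule integral_le[OF _ gi]) (simp_all add: gm integrable_const_ivl)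
  also have "\<dots> \<le> I" unfolding I_def
    by (rule integral_subset_le[OF _ gi g]) (auto intro: gnn)
  finally have "t * m \<le> I" using t0 by simp
  moreover have "t * m = I + m" using m by (simp add: t_def algebra_simps)
  ultimately show False using m by linarith
qed

lemma sq4r: "((p::real) + q + r + s)\<^sup>2 \<le> 4 * (p\<^sup>2 + q\<^sup>2 + r\<^sup>2 + s\<^sup>2)"
proof -
  have "4 * (p\<^sup>2 + q\<^sup>2 + r\<^sup>2 + s\<^sup>2) - (p + q + r + s)\<^sup>2
     = (p-q)\<^sup>2 + (p-r)\<^sup>2 + (p-s)\<^sup>2 + (q-r)\<^sup>2 + (q-s)\<^sup>2 + (r-s)\<^sup>2"
    by (simp add: power2_eq_square algebra_simps)
  moreover have "(p-q)\<^sup>2 + (p-r)\<^sup>2 + (p-s)\<^sup>2 + (q-r)\<^sup>2 + (q-s)\<^sup>2 + (r-s)\<^sup>2 \<ge> 0"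
    by simp
  ultimately show ?thesis by linarith
qed

lemma sq4: "(cmod (a + b + c + d))\<^sup>2 \<le> 4 * ((cmod a)\<^sup>2 + (cmod b)\<^sup>2 + (cmod c)\<^sup>2 + (cmod d)\<^sup>2)"
proof -
  have "cmod (a + b + c + d) \<le> cmod (a + b + c) + cmod d" by (rule norm_triangle_ineq)
  moreover have "cmod (a + b + c) \<le> cmod (a + b) + cmod c" by (rule norm_triangle_ineq)
  moreover have "cmod (a + b) \<le> cmod a + cmod b" by (rule norm_triangle_ineq)
  ultimately have "cmod (a + b + c + d) \<le> cmod a + cmod b + cmod c + cmod d" by linarith
  then have "(cmod (a + b + c + d))\<^sup>2 \<le> (cmod a + cmod b + cmod c + cmod d)\<^sup>2"
    by (simp add: power_mono)
  also have "\<dots> \<le> 4 * ((cmod a)\<^sup>2 + (cmod b)\<^sup>2 + (cmod c)\<^sup>2 + (cmod d)\<^sup>2)"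
    by (rule sq4r)
  finally show ?thesis .
qed

lemma bound4:
  assumes "L2_halfline v1" "L2_halfline v2" "L2_halfline v3" "L2_halfline v4"
  shows "\<exists>g. g integrable_on {0..} \<and>
     (\<forall>x. (cmod (a * v1 x + b * v2 x + c * v3 x + d * v4 x))\<^sup>2 \<le> g x)"
proof -
  let ?g = "\<lambda>x. 4 * ((cmod a)\<^sup>2 * (cmod (v1 x))\<^sup>2 + (cmod b)\<^sup>2 * (cmod (v2 x))\<^sup>2
     + (cmod c)\<^sup>2 * (cmod (v3 x))\<^sup>2 + (cmod d)\<^sup>2 * (cmod (v4 x))\<^sup>2)"
  have "?g integrable_on {0..}"
    using assms unfolding L2_halfline_def
    by (intro integrable_on_mult_right integrable_add) auto
  moreover have "\<forall>x. (cmod (a * v1 x + b * v2 x + c * v3 x + d * v4 x))\<^sup>2 \<le> ?g x"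
    by (intro allI order_trans[OF sq4]) (simp add: norm_mult power_mult_distrib)
  ultimately show ?thesis by (intro exI[of _ ?g] conjI)
qed

lemma step:
  fixes f :: "real \<Rightarrow> complex"
  assumes d: "\<forall>x\<ge>0. (f has_vector_derivative c * f x) (at x within {0..})" and c: "Re c \<ge> 0"
    and g: "g integrable_on {0..}" and b: "\<forall>x. (cmod (f x))\<^sup>2 \<le> g x"
  shows "\<forall>x\<ge>0. f x = 0"
proof -
  have e: "\<forall>x\<ge>0. f x = f 0 * exp (c * of_real x)" using ode1[OF d] .
  have f0: "f 0 = 0" using l2_zero[OF e c g] b by auto
  show ?thesis
  proof (intro allI impI)
    fix x :: real assume "x \<ge> 0"
    then have "f x = f 0 * exp (c * of_real x)" using e by blast
    then show "f x = 0" using f0 by simp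
  qed
qed

lemma eigen:
  assumes ev: "is_eigenvalue_H \<alpha> \<alpha>1 \<alpha>2 l0" and l0: "l0 > 0"
  shows "\<alpha> = of_real ((root 4 l0)^2 + \<alpha>1 * root 4 l0) \<and>
         \<alpha>2 = (root 4 l0)^3 + ((root 4 l0)^2 + \<alpha>1 * root 4 l0) * root 4 l0"
proof -
  define k where "k = root 4 l0"
  have k: "k > 0" using l0 by (simp add: k_def)
  have lk: "l0 = k^4" using l0 by (simp add: k_def real_root_pow_pos2)
  define K where "K = complex_of_real k"
  have lK: "complex_of_real l0 = K^4" by (simp add: K_def lk)
  obtain u u1 u2 u3 u4 :: "real \<Rightarrow> complex" where
    D: "\<forall>x\<ge>0. (u has_vector_derivative u1 x) (at x within {0..}) \<and>
              (u1 has_vector_derivative u2 x) (at x within {0..}) \<and>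
              (u2 has_vector_derivative u3 x) (at x within {0..}) \<and>
              (u3 has_vector_derivative u4 x) (at x within {0..})" and
    L: "L2_halfline u" "L2_halfline u1" "L2_halfline u2" "L2_halfline u3" "L2_halfline u4" and
    B1: "u2 0 = \<alpha> * u 0 + of_real \<alpha>1 * u1 0" and
    B2: "u3 0 = - of_real \<alpha>2 * u 0 - cnj \<alpha> * u1 0" and
    E: "\<forall>x\<ge>0. u4 x = of_real l0 * u x" and
    nz: "\<exists>x\<ge>0. u x \<noteq> 0"
    using ev unfolding is_eigenvalue_H_def by blast
  define y where "y x = 1 * u3 x + K * u2 x + K^2 * u1 x + K^3 * u x" for x
  have yd: "\<forall>x\<ge>0. (y has_vector_derivative K * y x) (at x within {0..})"
  proof (intro allI impI)
    fix x :: real assume x: "x \<ge> 0"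
    have "(y has_vector_derivative 1 * u4 x + K * u3 x + K^2 * u2 x + K^3 * u1 x) (at x within {0..})"
      unfolding y_def using D x by (intro derivative_intros) auto
    then show "(y has_vector_derivative K * y x) (at x within {0..})"
      using E x lK by (simp add: y_def algebra_simps power_numeral_reduce)
  qed
  obtain gy where gy: "gy integrable_on {0..}" "\<forall>x. (cmod (y x))\<^sup>2 \<le> gy x"
    using bound4[OF L(4) L(3) L(2) L(1), of 1 K "K^2" "K^3"] unfolding y_def by blast
  have y0: "\<forall>x\<ge>0. y x = 0" by (rule step[OF yd _ gy]) (simp add: K_def k less_imp_le)
  define z where "z x = 1 * u2 x + (K + \<i> * K) * u1 x + (\<i> * K^2) * u x + 0 * u x" for x
  have zd: "\<forall>x\<ge>0. (z has_vector_derivative (\<i> * K) * z x) (at x within {0..})"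
  proof (intro allI impI)
    fix x :: real assume x: "x \<ge> 0"
    have "(z has_vector_derivative 1 * u3 x + (K + \<i> * K) * u2 x + (\<i> * K^2) * u1 x + 0 * u1 x) (at x within {0..})"
      unfolding z_def using D x by (intro derivative_intros) auto
    moreover have "u3 x = y x - K * u2 x - K^2 * u1 x - K^3 * u x"
      by (simp add: y_def)
    ultimately have "(z has_vector_derivative 1 * (y x - K * u2 x - K^2 * u1 x - K^3 * u x) + (K + \<i> * K) * u2 x + (\<i> * K^2) * u1 x + 0 * u1 x) (at x within {0..})"
      by simp
    moreover have "y x = 0" using y0 x by simp
    ultimately show "(z has_vector_derivative (\<i> * K) * z x) (at x within {0..})"
      by (simp add: z_def algebra_simps power_numeral_reduce)
  qed
  obtain gz where gz: "gz integrable_on {0..}" "\<forall>x. (cmod (z x))\<^sup>2 \<le> gz x"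
    using bound4[OF L(3) L(2) L(1) L(1), of 1 "K + \<i> * K" "\<i> * K^2" 0] unfolding z_def by blast
  have z0: "\<forall>x\<ge>0. z x = 0" by (rule step[OF zd _ gz]) (simp add: K_def)
  define w where "w x = 1 * u1 x + K * u x + 0 * u x + 0 * u x" for x
  have wd: "\<forall>x\<ge>0. (w has_vector_derivative (- \<i> * K) * w x) (at x within {0..})"
  proof (intro allI impI)
    fix x :: real assume x: "x \<ge> 0"
    have "(w has_vector_derivative 1 * u2 x + K * u1 x + 0 * u1 x + 0 * u1 x) (at x within {0..})"
      unfolding w_def using D x by (intro derivative_intros) auto
    moreover have "u2 x = z x - (K + \<i> * K) * u1 x - (\<i> * K^2) * u x"
      by (simp add: z_def)
    ultimately have "(w has_vector_derivative 1 * (z x - (K + \<i> * K) * u1 x - (\<i> * K^2) * u x) + K * u1 x + 0 * u1 x + 0 * u1 x) (at x within {0..})"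
      by simp
    moreover have "z x = 0" using z0 x by simp
    ultimately show "(w has_vector_derivative (- \<i> * K) * w x) (at x within {0..})"
      by (simp add: w_def algebra_simps power2_eq_square)
  qed
  obtain gw where gw: "gw integrable_on {0..}" "\<forall>x. (cmod (w x))\<^sup>2 \<le> gw x"
    using bound4[OF L(2) L(1) L(1) L(1), of 1 K 0 0] unfolding w_def by blast
  have w0: "\<forall>x\<ge>0. w x = 0" by (rule step[OF wd _ gw]) (simp add: K_def)
  have u1e: "\<forall>x\<ge>0. u1 x = - K * u x" using w0 by (simp add: w_def eq_neg_iff_add_eq_0)
  have ud: "\<forall>x\<ge>0. (u has_vector_derivative (- K) * u x) (at x within {0..})"
    using D u1e by auto
  have ue: "\<forall>x\<ge>0. u x = u 0 * exp (- K * of_real x)" using ode1[OF ud] .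
  have u0: "u 0 \<noteq> 0"
  proof
    assume "u 0 = 0"
    obtain x where "x \<ge> 0" "u x \<noteq> 0" using nz by blast
    then show False using ue \<open>u 0 = 0\<close> by (metis mult_zero_left)
  qed
  have a1: "u1 0 = - K * u 0" using u1e by auto
  have h2: "u2 0 = z 0 - (K + \<i> * K) * u1 0 - (\<i> * K^2) * u 0" by (simp add: z_def)
  have zz: "z 0 = 0" using z0 by simp
  have a2: "u2 0 = K^2 * u 0"
    by (subst h2) (simp add: zz a1 algebra_simps power2_eq_square)
  have h3: "u3 0 = y 0 - K * u2 0 - K^2 * u1 0 - K^3 * u 0" by (simp add: y_def)
  have yy: "y 0 = 0" using y0 by simp
  have a3: "u3 0 = - (K^3 * u 0)"
    by (subst h3) (simp add: yy a1 a2 algebra_simps power2_eq_square power3_eq_cube)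
  have "K^2 * u 0 = (\<alpha> - of_real \<alpha>1 * K) * u 0" using B1 a1 a2 by (simp add: algebra_simps)
  then have "K^2 = \<alpha> - of_real \<alpha>1 * K" using u0 by (metis mult_cancel_right)
  then have al: "\<alpha> = K^2 + of_real \<alpha>1 * K" by (simp add: algebra_simps)
  have "(- (K^3)) * u 0 = (- of_real \<alpha>2 + cnj \<alpha> * K) * u 0" using B2 a1 a3 by (simp add: algebra_simps)
  then have "- (K^3) = - of_real \<alpha>2 + cnj \<alpha> * K" using u0 by (metis mult_cancel_right)
  then have "of_real \<alpha>2 = K^3 + cnj \<alpha> * K" by (simp add: algebra_simps)
  then have "of_real \<alpha>2 = K^3 + (K^2 + of_real \<alpha>1 * K) * K" using al by (simp add: K_def)
  then have "\<alpha>2 = k^3 + (k^2 + \<alpha>1 * k) * k" unfolding K_def by (metis of_real_eq_iff of_real_add of_real_mult of_real_power)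
  moreover have "\<alpha> = of_real (k^2 + \<alpha>1 * k)" using al by (simp add: K_def)
  ultimately show ?thesis by (simp add: k_def)
qed



definition Oms :: "complex \<Rightarrow> real \<Rightarrow> real \<Rightarrow> complex \<Rightarrow> complex" where
  "Oms \<alpha> \<alpha>1 \<alpha>2 z = alpha0 \<alpha> \<alpha>1 \<alpha>2 + (1 + \<i>) * of_real \<alpha>2 * z
     - 2 * \<i> * of_real (Re \<alpha>) * z^2 - (1 - \<i>) * of_real \<alpha>1 * z^3 - z^4"
definition Om' :: "complex \<Rightarrow> real \<Rightarrow> real \<Rightarrow> complex \<Rightarrow> complex" where
  "Om' \<alpha> \<alpha>1 \<alpha>2 z = (1 - \<i>) * of_real \<alpha>2 + 4 * \<i> * of_real (Re \<alpha>) * z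
     - 3 * (1 + \<i>) * of_real \<alpha>1 * z^2 - 4 * z^3"
definition Oms' :: "complex \<Rightarrow> real \<Rightarrow> real \<Rightarrow> complex \<Rightarrow> complex" where
  "Oms' \<alpha> \<alpha>1 \<alpha>2 z = (1 + \<i>) * of_real \<alpha>2 - 4 * \<i> * of_real (Re \<alpha>) * z
     - 3 * (1 - \<i>) * of_real \<alpha>1 * z^2 - 4 * z^3"
definition Nb :: "complex \<Rightarrow> real \<Rightarrow> real \<Rightarrow> complex \<Rightarrow> complex" where
  "Nb \<alpha> \<alpha>1 \<alpha>2 z = alpha0 \<alpha> \<alpha>1 \<alpha>2 + 2 * \<i> * of_real (Im \<alpha>) * z^2 + z^4"
definition Nb' :: "complex \<Rightarrow> real \<Rightarrow> real \<Rightarrow> complex \<Rightarrow> complex" where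
  "Nb' \<alpha> \<alpha>1 \<alpha>2 z = 4 * \<i> * of_real (Im \<alpha>) * z + 4 * z^3"

lemma d_Om: "(Omega \<alpha> \<alpha>1 \<alpha>2 has_field_derivative Om' \<alpha> \<alpha>1 \<alpha>2 z) (at z)"
  unfolding Omega_def[abs_def] Om'_def
  by (rule derivative_eq_intros refl)+ (simp add: algebra_simps power2_eq_square power3_eq_cube)

lemma d_Oms: "(Oms \<alpha> \<alpha>1 \<alpha>2 has_field_derivative Oms' \<alpha> \<alpha>1 \<alpha>2 z) (at z)"
  unfolding Oms_def[abs_def] Oms'_def
  by (rule derivative_eq_intros refl)+ (simp add: algebra_simps power2_eq_square power3_eq_cube)

lemma d_Nb: "(Nb \<alpha> \<alpha>1 \<alpha>2 has_field_derivative Nb' \<alpha> \<alpha>1 \<alpha>2 z) (at z)"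
  unfolding Nb_def[abs_def] Nb'_def
  by (rule derivative_eq_intros refl)+ (simp add: algebra_simps power2_eq_square power3_eq_cube)

lemma Om_poly: "Omega \<alpha> \<alpha>1 \<alpha>2 z = poly [:alpha0 \<alpha> \<alpha>1 \<alpha>2, (1 - \<i>) * of_real \<alpha>2, 2 * \<i> * of_real (Re \<alpha>), - (1 + \<i>) * of_real \<alpha>1, -1:] z"
  by (simp add: Omega_def algebra_simps power2_eq_square power3_eq_cube power4_eq_xxxx)

lemma Om_finite: "finite {z. Omega \<alpha> \<alpha>1 \<alpha>2 z = 0}"
  unfolding Om_poly by (rule poly_roots_finite) simp

lemma cnj_Om: "cnj (Omega \<alpha> \<alpha>1 \<alpha>2 (of_real k)) = Oms \<alpha> \<alpha>1 \<alpha>2 (of_real k)"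
  by (simp add: Omega_def Oms_def alpha0_def)

lemma Om_real: "Omega \<alpha> \<alpha>1 \<alpha>2 (of_real k) = Complex
    (\<alpha>1 * \<alpha>2 - ((Re \<alpha>)^2 + (Im \<alpha>)^2) + \<alpha>2 * k - \<alpha>1 * k^3 - k^4)
    (- \<alpha>2 * k + 2 * Re \<alpha> * k^2 - \<alpha>1 * k^3)"
  by (simp add: complex_eq_iff Omega_def alpha0_def cmod_power2 flip: of_real_power)

lemma key:
  assumes k: "k > 0" and z: "Omega \<alpha> \<alpha>1 \<alpha>2 (of_real k) = 0"
  shows "Im \<alpha> = 0 \<and> Re \<alpha> = k^2 + \<alpha>1 * k \<and> \<alpha>2 = k^3 + Re \<alpha> * k"
proof -
  have r: "\<alpha>1 * \<alpha>2 - ((Re \<alpha>)^2 + (Im \<alpha>)^2) + \<alpha>2 * k - \<alpha>1 * k^3 - k^4 = 0"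
   and i: "- \<alpha>2 * k + 2 * Re \<alpha> * k^2 - \<alpha>1 * k^3 = 0"
    using z unfolding Om_real by (simp_all add: complex_eq_iff)
  have "k * (2 * Re \<alpha> * k - \<alpha>1 * k^2 - \<alpha>2) = 0"
    using i by (simp add: power2_eq_square power3_eq_cube algebra_simps)
  then have "2 * Re \<alpha> * k - \<alpha>1 * k^2 - \<alpha>2 = 0" using k by simp
  then have a2: "\<alpha>2 = 2 * Re \<alpha> * k - \<alpha>1 * k^2" by linarith
  have "(k^2 + \<alpha>1 * k - Re \<alpha>)^2 + (Im \<alpha>)^2 = 0"
    using r unfolding a2 by (simp add: power2_eq_square power3_eq_cube power4_eq_xxxx algebra_simps)
  then have "k^2 + \<alpha>1 * k - Re \<alpha> = 0" "Im \<alpha> = 0"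
    by (simp_all add: sum_power2_eq_zero_iff)
  then have ha: "Re \<alpha> = k^2 + \<alpha>1 * k" and hb: "Im \<alpha> = 0" by simp_all
  have "\<alpha>2 = k^3 + Re \<alpha> * k" unfolding a2 ha by (simp add: power2_eq_square power3_eq_cube algebra_simps)
  then show ?thesis using ha hb by simp
qed

lemma vals:
  assumes a: "\<alpha> = of_real (k^2 + \<alpha>1 * k)" and b: "\<alpha>2 = k^3 + (k^2 + \<alpha>1 * k) * k"
  defines "K \<equiv> complex_of_real k"
  shows "Omega \<alpha> \<alpha>1 \<alpha>2 K = 0" "Oms \<alpha> \<alpha>1 \<alpha>2 K = 0" "Nb \<alpha> \<alpha>1 \<alpha>2 K = 0"
    "Om' \<alpha> \<alpha>1 \<alpha>2 K = - 2 * K * (\<alpha> - \<i> * K^2)"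
    "Oms' \<alpha> \<alpha>1 \<alpha>2 K = - 2 * K * (\<alpha> + \<i> * K^2)"
    "Nb' \<alpha> \<alpha>1 \<alpha>2 K = 4 * K^3"
  using a b unfolding K_def
  by (simp_all add: complex_eq_iff Omega_def Oms_def Nb_def Om'_def Oms'_def Nb'_def alpha0_def
      cmod_power2 flip: of_real_power) (simp_all add: algebra_simps power2_eq_square power3_eq_cube power4_eq_xxxx)



lemma smooth_holo:
  assumes g: "g holomorphic_on V" and V: "open V" and S: "\<And>x. x \<in> S \<Longrightarrow> of_real x \<in> V"
  shows "smooth_on S (\<lambda>x. g (of_real x))"
proof -
  have d: "((deriv ^^ n) g has_field_derivative deriv ((deriv ^^ n) g) z) (at z)" if "z \<in> V" for n z
    using holomorphic_derivI[OF holomorphic_higher_deriv[OF g V] V that, of n UNIV] by simp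
  show ?thesis unfolding smooth_on_def
    by (intro exI[of _ "\<lambda>n x. (deriv ^^ n) g (of_real x)"]) (auto intro!: has_vector_derivative_real_field d S)
qed

lemma Om'_nz:
  assumes k: "k > 0" and z: "Omega \<alpha> \<alpha>1 \<alpha>2 (of_real k) = 0"
  shows "Om' \<alpha> \<alpha>1 \<alpha>2 (of_real k) \<noteq> 0"
proof -
  from key[OF k z] have a: "\<alpha> = of_real (k^2 + \<alpha>1 * k)" and b: "\<alpha>2 = k^3 + (k^2 + \<alpha>1 * k) * k"
    by (simp_all add: complex_eq_iff)
  have "Om' \<alpha> \<alpha>1 \<alpha>2 (of_real k) = - 2 * of_real k * (\<alpha> - \<i> * (of_real k)^2)"
    using vals(4)[OF a b] .
  moreover have "\<alpha> - \<i> * (of_real k)^2 \<noteq> 0"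
  proof
    assume "\<alpha> - \<i> * (of_real k)^2 = 0"
    then have "Im (\<alpha> - \<i> * (of_real k)^2) = 0" by simp
    then show False using a k by (simp flip: of_real_power)
  qed
  ultimately show ?thesis using k by simp
qed

lemma ext_holo:
  fixes Nm Nm' :: "complex \<Rightarrow> complex"
  assumes dN: "\<And>z. (Nm has_field_derivative Nm' z) (at z)"
   and zN: "\<And>k. k > 0 \<Longrightarrow> Omega \<alpha> \<alpha>1 \<alpha>2 (of_real k) = 0 \<Longrightarrow> Nm (of_real k) = 0"
   and U_def: "U = {z. Re z > 0} - ({z. Omega \<alpha> \<alpha>1 \<alpha>2 z = 0} - {z. Im z = 0 \<and> Re z > 0})"
  shows "(\<lambda>z. if Omega \<alpha> \<alpha>1 \<alpha>2 z = 0 then Nm' z / Om' \<alpha> \<alpha>1 \<alpha>2 z else Nm z / Omega \<alpha> \<alpha>1 \<alpha>2 z)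
           holomorphic_on U" (is "?F holomorphic_on U")
    and "open U"
proof -
  let ?O = "Omega \<alpha> \<alpha>1 \<alpha>2"
  define Z where "Z = {z. ?O z = 0}"
  define P where "P = Z \<inter> {z. Im z = 0 \<and> Re z > 0}"
  have fZ: "finite Z" unfolding Z_def by (rule Om_finite)
  have fP: "finite P" using fZ by (simp add: P_def)
  have U_eq: "U = {z. Re z > 0} - (Z - P)" by (auto simp: U_def Z_def P_def)
  show oU: "open U" unfolding U_eq
    by (intro open_Diff finite_imp_closed) (auto simp: open_halfspace_Re_gt fZ)
  have hN: "Nm holomorphic_on A" for A
    using dN by (auto simp: holomorphic_on_def field_differentiable_def intro: has_field_derivative_at_within)
  have hO: "?O holomorphic_on A" for A
    using d_Om[of \<alpha> \<alpha>1 \<alpha>2] by (auto simp: holomorphic_on_def field_differentiable_def intro: has_field_derivative_at_within)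
  have "(\<lambda>z. Nm z / ?O z) holomorphic_on (U - P)"
    by (rule holomorphic_on_divide[OF hN hO]) (auto simp: U_eq Z_def)
  then have h1: "?F holomorphic_on (U - P)"
    by (rule holomorphic_transform) (auto simp: U_eq Z_def)
  have lim: "(?F \<longlongrightarrow> ?F z0) (at z0 within U)" if z0: "z0 \<in> P" for z0
  proof -
    obtain k where k: "k > 0" "z0 = of_real k" using z0 unfolding P_def
      by (metis (mono_tags, lifting) Int_iff complex_is_Real_iff mem_Collect_eq of_real_Re)
    have O0: "?O z0 = 0" using z0 by (simp add: P_def Z_def)
    have N0: "Nm z0 = 0" using zN[of k] k O0 by simp
    have D0: "Om' \<alpha> \<alpha>1 \<alpha>2 z0 \<noteq> 0" using Om'_nz[of k] k O0 by simp
    have oA: "open (UNIV - (Z - {z0}))" by (intro open_Diff finite_imp_closed) (auto simp: fZ)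
    have ev: "eventually (\<lambda>z. z \<in> (UNIV - (Z - {z0})) - {z0}) (at z0)"
      by (rule eventually_at_in_open[OF oA]) auto
    have ev2: "eventually (\<lambda>z. ((Nm z - Nm z0) / (z - z0)) / ((?O z - ?O z0) / (z - z0)) = ?F z) (at z0)"
      using ev by eventually_elim (auto simp: Z_def O0 N0)
    have t1: "((\<lambda>z. (Nm z - Nm z0) / (z - z0)) \<longlongrightarrow> Nm' z0) (at z0)"
      using dN[of z0] by (simp add: has_field_derivative_iff)
    have t2: "((\<lambda>z. (?O z - ?O z0) / (z - z0)) \<longlongrightarrow> Om' \<alpha> \<alpha>1 \<alpha>2 z0) (at z0)"
      using d_Om[of \<alpha> \<alpha>1 \<alpha>2 z0] by (simp add: has_field_derivative_iff)
    have "((\<lambda>z. ((Nm z - Nm z0) / (z - z0)) / ((?O z - ?O z0) / (z - z0))) \<longlongrightarrow> Nm' z0 / Om' \<alpha> \<alpha>1 \<alpha>2 z0) (at z0)"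
      by (rule tendsto_divide[OF t1 t2 D0])
    then have "(?F \<longlongrightarrow> Nm' z0 / Om' \<alpha> \<alpha>1 \<alpha>2 z0) (at z0)"
      by (rule Lim_transform_eventually[OF _ ev2])
    then have "(?F \<longlongrightarrow> ?F z0) (at z0)" using O0 by simp
    then show ?thesis by (rule tendsto_within_subset) simp
  qed
  show "?F holomorphic_on U"
    by (rule no_isolated_singularity'[OF lim _ oU fP]) (use h1 in auto)
qed



lemma final_vals:
  assumes k: "k > 0" and a: "\<alpha> = of_real (k^2 + \<alpha>1 * k)" and b: "\<alpha>2 = k^3 + (k^2 + \<alpha>1 * k) * k"
  shows "Oms' \<alpha> \<alpha>1 \<alpha>2 (of_real k) / Om' \<alpha> \<alpha>1 \<alpha>2 (of_real k)
           = (\<alpha> + \<i> * of_real (k^2)) / (\<alpha> - \<i> * of_real (k^2))"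
    "Nb' \<alpha> \<alpha>1 \<alpha>2 (of_real k) / Om' \<alpha> \<alpha>1 \<alpha>2 (of_real k)
           = - (2 * of_real (k^2)) / (\<alpha> - \<i> * of_real (k^2))"
proof -
  have nz: "\<alpha> - \<i> * of_real (k^2) \<noteq> 0"
  proof
    assume "\<alpha> - \<i> * of_real (k^2) = 0"
    then have "Im (\<alpha> - \<i> * of_real (k^2)) = 0" by simp
    then show False using a k by simp
  qed
  have K: "- 2 * complex_of_real k \<noteq> 0" using k by simp
  have e1: "\<i> * (complex_of_real k)^2 = \<i> * of_real (k^2)" by simp
  show "Oms' \<alpha> \<alpha>1 \<alpha>2 (of_real k) / Om' \<alpha> \<alpha>1 \<alpha>2 (of_real k)
           = (\<alpha> + \<i> * of_real (k^2)) / (\<alpha> - \<i> * of_real (k^2))"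
    unfolding vals(4,5)[OF a b] e1 by (rule mult_divide_mult_cancel_left[OF K])
  have e2: "4 * (complex_of_real k)^3 = (- 2 * complex_of_real k) * (- (2 * of_real (k^2)))"
    by (simp add: power3_eq_cube power2_eq_square)
  show "Nb' \<alpha> \<alpha>1 \<alpha>2 (of_real k) / Om' \<alpha> \<alpha>1 \<alpha>2 (of_real k)
           = - (2 * of_real (k^2)) / (\<alpha> - \<i> * of_real (k^2))"
    unfolding vals(4,6)[OF a b] e1 e2 by (rule mult_divide_mult_cancel_left[OF K])
qed

lemma kk_powr: "l > 0 \<Longrightarrow> complex_of_real l powr (1/4) = kk l"
proof -
  assume l: "l > 0"
  have "complex_of_real l powr (1/4) = complex_of_real l powr (complex_of_real (1/4))" by simp
  also have "\<dots> = complex_of_real (l powr (1/4))" using l by (intro powr_of_real) simp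
  also have "l powr (1/4) = root 4 l" using l by (simp add: root_powr_inverse)
  finally show ?thesis by (simp add: kk_def)
qed

theorem proposition5p10:
  fixes \<alpha> :: complex and \<alpha>1 \<alpha>2 :: real
  shows "\<exists>S B :: real \<Rightarrow> complex.
    (\<forall>l>0. Omega \<alpha> \<alpha>1 \<alpha>2 (kk l) \<noteq> 0 \<longrightarrow>
        S l = s_fun \<alpha> \<alpha>1 \<alpha>2 l \<and> B l = b_fun \<alpha> \<alpha>1 \<alpha>2 l) \<and>
    smooth_on {0<..} S \<and> smooth_on {0<..} B \<and>
    (\<forall>l0>0. is_eigenvalue_H \<alpha> \<alpha>1 \<alpha>2 l0 \<longrightarrow>
        S l0 = (\<alpha> + \<i> * of_real (sqrt l0)) / (\<alpha> - \<i> * of_real (sqrt l0)) \<and>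
        B l0 = - (2 * of_real (sqrt l0)) / (\<alpha> - \<i> * of_real (sqrt l0)))"
proof -
  let ?O = "Omega \<alpha> \<alpha>1 \<alpha>2"
  define U where "U = {z. Re z > 0} - ({z. ?O z = 0} - {z. Im z = 0 \<and> Re z > 0})"
  define FS where "FS = (\<lambda>z. if ?O z = 0 then Oms' \<alpha> \<alpha>1 \<alpha>2 z / Om' \<alpha> \<alpha>1 \<alpha>2 z else Oms \<alpha> \<alpha>1 \<alpha>2 z / ?O z)"
  define FB where "FB = (\<lambda>z. if ?O z = 0 then Nb' \<alpha> \<alpha>1 \<alpha>2 z / Om' \<alpha> \<alpha>1 \<alpha>2 z else Nb \<alpha> \<alpha>1 \<alpha>2 z / ?O z)"
  have zS: "Oms \<alpha> \<alpha>1 \<alpha>2 (of_real k) = 0" if "k > 0" "?O (of_real k) = 0" for k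
    using that by (metis cnj_Om complex_cnj_zero)
  have hS: "FS holomorphic_on U" unfolding FS_def
    by (rule ext_holo(1)[OF d_Oms zS U_def])
  have oU: "open U"
    by (rule ext_holo(2)[OF d_Oms zS U_def])
  have hB: "FB holomorphic_on U" unfolding FB_def
  proof (rule ext_holo[OF d_Nb _ U_def])
    fix k :: real assume k: "k > 0" "?O (of_real k) = 0"
    from key[OF k] have a: "\<alpha> = of_real (k^2 + \<alpha>1 * k)" and b: "\<alpha>2 = k^3 + (k^2 + \<alpha>1 * k) * k"
      by (simp_all add: complex_eq_iff)
    show "Nb \<alpha> \<alpha>1 \<alpha>2 (of_real k) = 0" by (rule vals(3)[OF a b])
  qed
  define V where "V = {w. Re w > 0} \<inter> (\<lambda>w. w powr (1/4)) -` U"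
  have pw: "(\<lambda>w. w powr (1/4)) holomorphic_on {w. Re w > 0}"
    by (intro holomorphic_intros) (auto simp: complex_nonpos_Reals_iff)
  have oV: "open V" unfolding V_def
    by (rule continuous_open_preimage[OF holomorphic_on_imp_continuous_on[OF pw] _ oU])
       (simp add: open_halfspace_Re_gt)
  have pwV: "(\<lambda>w. w powr (1/4)) holomorphic_on V"
    by (rule holomorphic_on_subset[OF pw]) (auto simp: V_def)
  have gS: "(FS \<circ> (\<lambda>w. w powr (1/4))) holomorphic_on V"
    by (rule holomorphic_on_compose[OF pwV holomorphic_on_subset[OF hS]]) (auto simp: V_def)
  have gB: "(FB \<circ> (\<lambda>w. w powr (1/4))) holomorphic_on V"
    by (rule holomorphic_on_compose[OF pwV holomorphic_on_subset[OF hB]]) (auto simp: V_def)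
  have inV: "of_real l \<in> V" if "l \<in> {0<..}" for l :: real
  proof -
    have l: "l > 0" using that by simp
    have "kk l \<in> U" using l by (simp add: U_def kk_def)
    then show ?thesis using l kk_powr[OF l] by (simp add: V_def)
  qed
  define S where "S = (\<lambda>l::real. (FS \<circ> (\<lambda>w. w powr (1/4))) (of_real l))"
  define B where "B = (\<lambda>l::real. (FB \<circ> (\<lambda>w. w powr (1/4))) (of_real l))"
  have Sv: "S l = FS (kk l)" and Bv: "B l = FB (kk l)" if "l > 0" for l
    using kk_powr[OF that] by (simp_all add: S_def B_def)
  have sm1: "smooth_on {0<..} S"
    unfolding S_def by (rule smooth_holo[OF gS oV inV])
  have sm2: "smooth_on {0<..} B"
    unfolding B_def by (rule smooth_holo[OF gB oV inV])
  note sm = sm1 sm2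
  have p1: "\<forall>l>0. ?O (kk l) \<noteq> 0 \<longrightarrow> S l = s_fun \<alpha> \<alpha>1 \<alpha>2 l \<and> B l = b_fun \<alpha> \<alpha>1 \<alpha>2 l"
  proof (intro allI impI)
    fix l :: real assume l: "l > 0" and nz: "?O (kk l) \<noteq> 0"
    show "S l = s_fun \<alpha> \<alpha>1 \<alpha>2 l \<and> B l = b_fun \<alpha> \<alpha>1 \<alpha>2 l"
      using nz unfolding Sv[OF l] Bv[OF l] FS_def FB_def s_fun_def b_fun_def
      by (simp add: kk_def cnj_Om Nb_def)
  qed
  have p2: "\<forall>l0>0. is_eigenvalue_H \<alpha> \<alpha>1 \<alpha>2 l0 \<longrightarrow>
        S l0 = (\<alpha> + \<i> * of_real (sqrt l0)) / (\<alpha> - \<i> * of_real (sqrt l0)) \<and>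
        B l0 = - (2 * of_real (sqrt l0)) / (\<alpha> - \<i> * of_real (sqrt l0))"
  proof (intro allI impI)
    fix l0 :: real assume l0: "l0 > 0" and ev: "is_eigenvalue_H \<alpha> \<alpha>1 \<alpha>2 l0"
    define k where "k = root 4 l0"
    have k: "k > 0" using l0 by (simp add: k_def)
    have a: "\<alpha> = of_real (k^2 + \<alpha>1 * k)" and b: "\<alpha>2 = k^3 + (k^2 + \<alpha>1 * k) * k"
      using eigen[OF ev l0] by (simp_all add: k_def)
    have sq: "sqrt l0 = k^2"
      by (rule real_sqrt_unique) (use l0 in \<open>simp_all add: k_def flip: power_mult\<close>)
    have O0: "?O (kk l0) = 0" using vals(1)[OF a b] by (simp add: kk_def k_def)
    show "S l0 = (\<alpha> + \<i> * of_real (sqrt l0)) / (\<alpha> - \<i> * of_real (sqrt l0)) \<and>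
        B l0 = - (2 * of_real (sqrt l0)) / (\<alpha> - \<i> * of_real (sqrt l0))"
      unfolding Sv[OF l0] Bv[OF l0] FS_def FB_def sq using O0 final_vals[OF k a b]
      by (simp add: kk_def k_def)
  qed
  show ?thesis using p1 sm p2 by blast
qed


end
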